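(* $\mathbf{M}=\boldsymbol{G}_N\mathbf{P}^t$.
   Context: Let $m\ge1$, $N=2^m$, $\mathbf{R}_m=\mathbb{F}_2[x_0,\dots,x_{m-1}]/(x_0^2-x_0,\dots,x_{m-1}^2-x_{m-1})$, and $\operatorname{ev}(Q)$ the evaluation vector of $Q\in\mathbf{R}_m$ at all points of $\mathbb{F}_2^m$. Let $\boldsymbol{G}_N=\begin{pmatrix}1&0\\1&1\end{pmatrix}^{\otimes m}$; row $i$ of $\boldsymbol{G}_N$ is $\operatorname{ev}$ of the monomial $x_0^{b_0}\cdots x_{m-1}^{b_{m-1}}$ with $(b_0,\dots,b_{m-1})$ the binary expansion of $2^m-1-i$. Let $\mathbf{P}\in\mathbb{F}_2^{N\times N}$ be upper triangular with ones on the diagonal (so $\mathcal{C}_{\mathbf{P}\boldsymbol{G}_N}(\mathcal{A})$, spanned by rows of $\mathbf{P}\boldsymbol{G}_N$ indexed by $\mathcal{A}$, is an upper polynomial polar code). For a monomial $h$, let $\check{h}=x_0\cdots x_{m-1}/h$ be its multiplicative complement; divisibility $f\mid g$ means the set of variables of $f$ is contained in that of $g$; $\operatorname{terms}(Q)$ is the set of monomials appearing in $Q$. The matrix $\mathbf{M}$ is defined by $M_{i,j}=|\{g\in\operatorname{terms}(P_j)\mid \check{g}\mid \check{f}\}| \pmod 2$, where $\operatorname{ev}(P_j)$ is row $j$ of $\mathbf{P}\boldsymbol{G}_N$ and $\operatorname{ev}(f)$ is row $i$ of $\boldsymbol{G}_N$. *)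

theory Defs
  imports "Jordan_Normal_Form.Matrix" "HOL-Library.Z2"
begin

(* A monomial of R_m is identified with the
   set of variable indices occurring in it (a subset of {..<m}); an element Q of R_m
   (multilinear polynomial over F_2) is identified with its set of terms terms(Q). *)

definition monoms :: "nat \<Rightarrow> nat set set" where
  "monoms m = {g. g \<subseteq> {..<m}}"

definition mon_of_row :: "nat \<Rightarrow> nat \<Rightarrow> nat set" where
  "mon_of_row m i = {k. k < m \<and> bit (2^m - 1 - i) k}"

(* the point of F_2^m attached to column c (x_k = 1 iff k in the set) *)
definition point_of_col :: "nat \<Rightarrow> nat \<Rightarrow> nat set" where
  "point_of_col m c = {k. k < m \<and> bit (2^m - 1 - c) k}"

definition evp :: "nat \<Rightarrow> nat set set \<Rightarrow> nat \<Rightarrow> bit" where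
  "evp m Q c = of_nat (card {g \<in> Q. g \<subseteq> point_of_col m c})"

definition GN :: "nat \<Rightarrow> bit mat" where
  "GN m = mat (2^m) (2^m) (\<lambda>(i,c). evp m {mon_of_row m i} c)"

definition upper_unitri :: "nat \<Rightarrow> bit mat \<Rightarrow> bool" where
  "upper_unitri n P \<longleftrightarrow> P \<in> carrier_mat n n \<and>
     (\<forall>i<n. \<forall>j<n. j < i \<longrightarrow> P $$ (i,j) = 0) \<and> (\<forall>i<n. P $$ (i,i) = 1)"

definition terms_row :: "nat \<Rightarrow> bit mat \<Rightarrow> nat \<Rightarrow> nat set set" where
  "terms_row m P j = (THE Q. Q \<subseteq> monoms m \<and>
      (\<forall>c < 2^m. evp m Q c = (P * GN m) $$ (j, c)))"

definition mcompl :: "nat \<Rightarrow> nat set \<Rightarrow> nat set" where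
  "mcompl m h = {..<m} - h"

definition mdvd :: "nat set \<Rightarrow> nat set \<Rightarrow> bool" where
  "mdvd f g \<longleftrightarrow> f \<subseteq> g"

definition Mmat :: "nat \<Rightarrow> bit mat \<Rightarrow> bit mat" where
  "Mmat m P = mat (2^m) (2^m) (\<lambda>(i,j).
     of_nat (card {g \<in> terms_row m P j. mdvd (mcompl m g) (mcompl m (mon_of_row m i))}))"

end

theory Submission
  imports Defs
begin

lemma sum_ind:
  assumes "finite A"
  shows "(\<Sum>x\<in>A. if \<phi> x then (1::'a::semiring_1) else 0) = of_nat (card {x\<in>A. \<phi> x})"
proof -
  have "(\<Sum>x\<in>A. if \<phi> x then (1::'a) else 0) = (\<Sum>x\<in>{x\<in>A. \<phi> x}. 1)"
    using sum.inter_filter[OF assms, of "\<lambda>_. (1::'a)" \<phi>] by simp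
  then show ?thesis by simp
qed

lemma mon_sub: "mon_of_row m i \<subseteq> {..<m}"
  unfolding mon_of_row_def by auto

lemma mon_inj: "inj_on (mon_of_row m) {..<2^m}"
proof
  fix i i' assume i: "i \<in> {..<(2::nat)^m}" and i': "i' \<in> {..<(2::nat)^m}"
    and eq: "mon_of_row m i = mon_of_row m i'"
  define a where "a = (2::nat)^m - 1 - i"
  define b where "b = (2::nat)^m - 1 - i'"
  have ta: "take_bit m a = a" using i unfolding a_def take_bit_nat_eq_self_iff by auto
  have tb: "take_bit m b = b" using i' unfolding b_def take_bit_nat_eq_self_iff by auto
  have "bit a k = bit b k" for k
  proof -
    have "bit (take_bit m a) k = bit (take_bit m b) k"
      using eq unfolding mon_of_row_def a_def b_def bit_take_bit_iff by (auto simp: set_eq_iff)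
    then show ?thesis using ta tb by simp
  qed
  then have "a = b" by (simp add: bit_eq_iff)
  then show "i = i'" using i i' unfolding a_def b_def by auto
qed

lemma mon_surj: "mon_of_row m ` {..<2^m} = Pow {..<m}"
proof -
  have sub: "mon_of_row m ` {..<2^m} \<subseteq> Pow {..<m}" using mon_sub by auto
  have "card (mon_of_row m ` {..<2^m}) = 2^m"
    using card_image[OF mon_inj] by simp
  also have "\<dots> = card (Pow {..<m::nat})" by (simp add: card_Pow)
  finally show ?thesis using card_subset_eq[OF _ sub] by simp
qed

lemma ev_unique:
  fixes Q1 Q2 :: "nat set set"
  assumes "finite Q1" "finite Q2"
    and ev: "\<And>p. p \<subseteq> {..<m} \<Longrightarrow> even (card {g\<in>Q1. g \<subseteq> p}) = even (card {g\<in>Q2. g \<subseteq> p})"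
    and s1: "Q1 \<subseteq> Pow {..<m}" and s2: "Q2 \<subseteq> Pow {..<m}"
  shows "Q1 = Q2"
proof (rule ccontr)
  assume ne: "Q1 \<noteq> Q2"
  define D where "D = (Q1 - Q2) \<union> (Q2 - Q1)"
  have "finite D" "D \<noteq> {}" using assms ne unfolding D_def by auto
  then obtain g0 where g0: "g0 \<in> D" and mn: "\<forall>b\<in>D. b \<le> g0 \<longrightarrow> g0 = b"
    using finite_has_minimal by blast
  have p: "g0 \<subseteq> {..<m}" using g0 s1 s2 unfolding D_def by auto
  define A1 where "A1 = {g\<in>Q1. g \<subseteq> g0}"
  define A2 where "A2 = {g\<in>Q2. g \<subseteq> g0}"
  have f: "finite A1" "finite A2" using assms unfolding A1_def A2_def by auto
  have dd: "(A1 - A2) \<union> (A2 - A1) = {g0}"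
    using g0 mn unfolding A1_def A2_def D_def by auto
  have un: "A1 \<union> A2 = (A1 \<inter> A2) \<union> ((A1 - A2) \<union> (A2 - A1))" by auto
  have "card (A1 \<union> A2) = card (A1 \<inter> A2) + card ((A1 - A2) \<union> (A2 - A1))"
    by (subst un, rule card_Un_disjoint) (use f in auto)
  then have "card A1 + card A2 = 2 * card (A1 \<inter> A2) + 1"
    using card_Un_Int[OF f] dd by simp
  moreover have "even (card A1) = even (card A2)" using ev[OF p] unfolding A1_def A2_def .
  ultimately show False by presburger
qed


lemma poc: "point_of_col m c = mon_of_row m c"
  unfolding point_of_col_def mon_of_row_def by simp

lemma evp_single: "evp m {f} c = (if f \<subseteq> mon_of_row m c then 1 else 0)"
proof -
  have "{g\<in>{f}. g \<subseteq> mon_of_row m c} = (if f \<subseteq> mon_of_row m c then {f} else {})" by auto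
  then show ?thesis unfolding evp_def poc by simp
qed

lemma GN_dim [simp]: "dim_row (GN m) = 2^m" "dim_col (GN m) = 2^m"
  unfolding GN_def by simp_all

lemma GN_entry: "i < 2^m \<Longrightarrow> c < 2^m \<Longrightarrow> GN m $$ (i,c) = evp m {mon_of_row m i} c"
  unfolding GN_def by simp

lemma bit01: "(x::bit) * (if b then 1 else 0) = (if x = 1 \<and> b then 1 else 0)"
  by (cases x) auto

lemma bit01': "(if b then 1 else 0) * (x::bit) = (if x = 1 \<and> b then 1 else 0)"
  by (cases x) auto

definition Qj :: "nat \<Rightarrow> bit mat \<Rightarrow> nat \<Rightarrow> nat set set" where
  "Qj m P j = mon_of_row m ` {k. k < 2^m \<and> P $$ (j,k) = 1}"

lemma card_Qj:
  "card {g\<in>Qj m P j. R g} = card {k. k < 2^m \<and> P $$ (j,k) = 1 \<and> R (mon_of_row m k)}"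
proof -
  have "{g\<in>Qj m P j. R g} = mon_of_row m ` {k. k < 2^m \<and> P $$ (j,k) = 1 \<and> R (mon_of_row m k)}"
    unfolding Qj_def by auto
  moreover have "inj_on (mon_of_row m) {k. k < 2^m \<and> P $$ (j,k) = 1 \<and> R (mon_of_row m k)}"
    by (rule inj_on_subset[OF mon_inj]) auto
  ultimately show ?thesis by (simp add: card_image)
qed

lemma PG_entry:
  assumes P: "P \<in> carrier_mat (2^m) (2^m)" and j: "j < 2^m" and c: "c < 2^m"
  shows "(P * GN m) $$ (j, c) = evp m (Qj m P j) c"
proof -
  have "(P * GN m) $$ (j, c) = (\<Sum>k\<in>{..<2^m}. P $$ (j,k) * evp m {mon_of_row m k} c)"
    using P j c unfolding GN_def
    by (simp add: scalar_prod_def atLeast0LessThan)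
  also have "\<dots> = (\<Sum>k\<in>{..<2^m}. if P $$ (j,k) = 1 \<and> mon_of_row m k \<subseteq> mon_of_row m c then 1 else 0)"
    by (rule sum.cong) (simp_all add: evp_single bit01)
  also have "\<dots> = of_nat (card {k\<in>{..<2^m}. P $$ (j,k) = 1 \<and> mon_of_row m k \<subseteq> mon_of_row m c})"
    by (rule sum_ind) simp
  also have "\<dots> = evp m (Qj m P j) c"
    unfolding evp_def poc card_Qj by simp
  finally show ?thesis .
qed

lemma terms_row_eq:
  assumes P: "P \<in> carrier_mat (2^m) (2^m)" and j: "j < 2^m"
  shows "terms_row m P j = Qj m P j"
  unfolding terms_row_def
proof (rule the_equality)
  show "Qj m P j \<subseteq> monoms m \<and> (\<forall>c<2 ^ m. evp m (Qj m P j) c = (P * GN m) $$ (j, c))"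
    using PG_entry[OF P j] mon_sub unfolding Qj_def monoms_def by auto
next
  fix Q assume a: "Q \<subseteq> monoms m \<and> (\<forall>c<2 ^ m. evp m Q c = (P * GN m) $$ (j, c))"
  show "Q = Qj m P j"
  proof (rule ev_unique[where m=m])
    have "monoms m = Pow {..<m}" unfolding monoms_def by auto
    then show s1: "Q \<subseteq> Pow {..<m}" using a by auto
    then show "finite Q" by (rule finite_subset) simp
    show s2: "Qj m P j \<subseteq> Pow {..<m}" unfolding Qj_def using mon_sub by auto
    then show "finite (Qj m P j)" by (rule finite_subset) simp
    fix p :: "nat set" assume p: "p \<subseteq> {..<m}"
    then obtain c where c: "c < 2^m" "p = mon_of_row m c" using mon_surj[of m] by blast
    have "evp m Q c = evp m (Qj m P j) c" using a c PG_entry[OF P j c(1)] by simp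
    then have "even (of_nat (card {g\<in>Q. g \<subseteq> p}) :: bit) = even (of_nat (card {g\<in>Qj m P j. g \<subseteq> p}) :: bit)"
      unfolding evp_def poc c(2) by (simp only:)
    then show "even (card {g\<in>Q. g \<subseteq> p}) = even (card {g\<in>Qj m P j. g \<subseteq> p})" by (metis even_of_nat_iff)
  qed
qed

theorem proposition3:
  fixes m :: nat and P :: "bit mat"
  assumes "m \<ge> 1"
    and "upper_unitri (2^m) P"
  shows "Mmat m P = GN m * transpose_mat P"
proof -
  have P: "P \<in> carrier_mat (2^m) (2^m)" using assms(2) unfolding upper_unitri_def by auto
  show ?thesis
  proof (rule eq_matI)
    show "dim_row (Mmat m P) = dim_row (GN m * transpose_mat P)"
      unfolding Mmat_def GN_def by simp
    show "dim_col (Mmat m P) = dim_col (GN m * transpose_mat P)"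
      using P unfolding Mmat_def GN_def by simp
    fix i j assume i: "i < dim_row (GN m * transpose_mat P)" and j: "j < dim_col (GN m * transpose_mat P)"
    then have i: "i < 2^m" and j: "j < 2^m" using P unfolding GN_def by auto
    have cmp: "mdvd (mcompl m (mon_of_row m k)) (mcompl m (mon_of_row m i)) \<longleftrightarrow> mon_of_row m i \<subseteq> mon_of_row m k" for k
      using mon_sub[of m i] mon_sub[of m k] unfolding mdvd_def mcompl_def by auto
    have "Mmat m P $$ (i,j) = of_nat (card {k. k < 2^m \<and> P $$ (j,k) = 1 \<and> mon_of_row m i \<subseteq> mon_of_row m k})"
      unfolding Mmat_def using i j terms_row_eq[OF P j] card_Qj cmp by simp
    also have "\<dots> = (\<Sum>k\<in>{..<2^m}. if P $$ (j,k) = 1 \<and> mon_of_row m i \<subseteq> mon_of_row m k then 1 else 0)"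
      by (subst sum_ind) (simp_all add: lessThan_def)
    also have "\<dots> = (\<Sum>k\<in>{..<2^m}. GN m $$ (i,k) * P $$ (j,k))"
      by (rule sum.cong) (simp_all add: GN_entry i evp_single bit01' poc)
    also have "\<dots> = (GN m * transpose_mat P) $$ (i,j)"
      using P i j by (simp add: scalar_prod_def atLeast0LessThan)
    finally show "Mmat m P $$ (i,j) = (GN m * transpose_mat P) $$ (i,j)" .
  qed
qed

end
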